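(* Let $R$ be a fixed $R$-transform and, for $t \ge 0$, set $R(t,z) \coloneqq R(z e^{t})$. Let $m(t,z)$ denote the Stieltjes transform whose $R$-transform is $R(t,\cdot)$, and let $\omega(t,\cdot)$ denote its functional inverse (so that $m(t,\omega(t,z)) = z$), assumed differentiable in $(t,z)$. Then $m$ satisfies the partial differential equation \[ \frac{\partial m}{\partial t}(t,z) = -m(t,z) + \frac{1}{m(t,z)}\,\frac{\partial m}{\partial z}(t,z). \]
   Context: For a probability density $\rho$ on $\mathbb{R}$, its Stieltjes transform is $m(z) = \int_{\mathbb{R}} \frac{\rho(x)}{x-z}\,\mathrm{d}x$ for $z \in \mathbb{C}^{+} = \{\Im z > 0\}$. Letting $\omega$ denote the functional inverse of $m$ (i.e. $m(\omega(z)) = z$), the $R$-transform is $R(z) = \omega(-z) - z^{-1}$. Thus "the Stieltjes transform corresponding to the $R$-transform $R(t,\cdot)$" means the function $m(t,\cdot)$ with inverse $\omega(t,\cdot)$ satisfying $R(t,z) = \omega(t,-z) - z^{-1}$. *)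

theory Defs
  imports "HOL-Analysis.Analysis"
begin

definition prob_density :: "(real \<Rightarrow> real) \<Rightarrow> bool" where
  "prob_density \<rho> \<longleftrightarrow> (\<forall>x. 0 \<le> \<rho> x) \<and> has_bochner_integral lborel \<rho> 1"

text \<open>Stieltjes transform  m(z) = int rho(x)/(x - z) dx  (meant for Im z > 0).\<close>
definition stieltjes :: "(real \<Rightarrow> real) \<Rightarrow> complex \<Rightarrow> complex" where
  "stieltjes \<rho> z = integral\<^sup>L lborel (\<lambda>x. complex_of_real (\<rho> x) / (complex_of_real x - z))"

end

theory Submission imports Defs begin

lemma alg_helper: fixes w R' E qq :: complex
  assumes w0: "w \<noteq> 0" and o0: "qq \<noteq> 0" and od: "qq = R' * (- E) + 1 / w^2"
  shows "- (R' * (- (w * E)) / qq) = - w + (1 / qq) / w"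
proof -
  have h: "w^2 * qq = 1 - R'*E*w^2" using w0 unfolding od by (simp add: field_simps)
  have "- w + (1 / qq) / w = (1 - w^2*qq)/(qq * w)" using w0 o0 by (simp add: field_simps power2_eq_square)
  also have "\<dots> = R'*E*w/qq" unfolding h using w0 o0 by (simp add: field_simps power2_eq_square)
  finally show ?thesis by simp
qed

theorem proposition1:
  fixes R :: "complex \<Rightarrow> complex"
    and \<rho> :: "real \<Rightarrow> real \<Rightarrow> real"
    and m \<omega> :: "real \<Rightarrow> complex \<Rightarrow> complex"
    and W :: "(real \<times> complex) set"
    and t :: real and w :: complex
  assumes W_sub: "W \<subseteq> {(s, v). 0 \<le> s \<and> v \<noteq> 0}"
    and R_analytic: "R analytic_on {- (v * exp s) | s v. (s, v) \<in> W}"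
    and density: "\<forall>s\<ge>0. prob_density (\<rho> s)"
    and m_stieltjes: "\<forall>s\<ge>0. \<forall>z. 0 < Im z \<longrightarrow> m s z = stieltjes (\<rho> s) z"
    and inverse: "\<forall>(s, v)\<in>W. 0 < Im (\<omega> s v) \<and> m s (\<omega> s v) = v"
    and R_transform: "\<forall>(s, v)\<in>W. R ((- v) * exp s) = \<omega> s v + 1 / v"
    and \<omega>_diff: "\<forall>(s, v)\<in>W. (\<lambda>p. \<omega> (fst p) (snd p)) differentiable (at (s, v))"
    and m_diff: "\<forall>(s, v)\<in>W. (\<lambda>p. m (fst p) (snd p)) differentiable (at (s, \<omega> s v))"
    and pt: "(t, w) \<in> interior W"
  shows "vector_derivative (\<lambda>s. m s (\<omega> t w)) (at t)
           = - m t (\<omega> t w) + deriv (m t) (\<omega> t w) / m t (\<omega> t w)"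
proof -
  have tw: "(t, w) \<in> W" using pt interior_subset by blast
  have w0: "w \<noteq> 0" using tw W_sub by auto
  define z0 where "z0 = \<omega> t w"
  define E where "E = complex_of_real (exp t)"
  define c where "c = - (w * E)"
  have cS: "c \<in> {- (v * exp s) | s v. (s, v) \<in> W}"
  proof -
    have "c = - (w * exp (complex_of_real t))" unfolding c_def E_def by (simp add: exp_of_real)
    then show ?thesis using tw by blast
  qed
  have "R field_differentiable (at c)"
    using R_analytic cS analytic_on_imp_differentiable_at analytic_on_open by blast
  then have Rd: "(R has_field_derivative deriv R c) (at c)"
    using DERIV_deriv_iff_field_differentiable by blast
  define R' where "R' = deriv R c"
  define \<Omega> where "\<Omega> = (\<lambda>p::real\<times>complex. R (- (snd p) * complex_of_real (exp (fst p))) - 1 / snd p)"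
  define D\<Omega> where "D\<Omega> = (\<lambda>p::real\<times>complex. R' * (- (snd p) * E - w * E * complex_of_real (fst p)) + snd p / w^2)"
  have inner: "((\<lambda>p::real\<times>complex. - (snd p) * complex_of_real (exp (fst p))) has_derivative
       (\<lambda>p. - (snd p) * E - w * E * complex_of_real (fst p))) (at (t, w))"
    unfolding E_def
    by (auto intro!: derivative_eq_intros simp: algebra_simps)
  have \<Omega>d: "(\<Omega> has_derivative D\<Omega>) (at (t, w))"
  proof -
    have Rd': "(R has_derivative (\<lambda>x. R' * x)) (at (- (snd (t,w)) * complex_of_real (exp (fst (t,w)))))"
      using has_field_derivative_imp_has_derivative[OF Rd] unfolding R'_def c_def E_def by simp
    have c1: "((\<lambda>p::real\<times>complex. R (- (snd p) * complex_of_real (exp (fst p)))) has_derivative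
       (\<lambda>p. R' * (- (snd p) * E - w * E * complex_of_real (fst p)))) (at (t, w))"
      using diff_chain_at[OF inner Rd'] by (simp add: o_def)
    have c2: "((\<lambda>p::real\<times>complex. 1 / snd p) has_derivative (\<lambda>p. - (snd p / w^2))) (at (t, w))"
      using w0 by (auto intro!: derivative_eq_intros simp: power2_eq_square field_simps)
    show ?thesis using has_derivative_diff[OF c1 c2] unfolding \<Omega>_def D\<Omega>_def by simp
  qed
  obtain e where e: "e > 0" "ball (t, w) e \<subseteq> W" using pt open_contains_ball interior_subset
    by (metis mem_interior)
  have \<omega>\<Omega>: "\<omega> (fst p) (snd p) = \<Omega> p" if "p \<in> ball (t, w) e" for p
  proof -
    have pW: "p \<in> W" using that e by blast
    then have "snd p \<noteq> 0" using W_sub by auto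
    moreover have "R ((- snd p) * exp (fst p)) = \<omega> (fst p) (snd p) + 1 / snd p"
      using R_transform pW by (cases p) auto
    ultimately show ?thesis unfolding \<Omega>_def by simp
  qed
  obtain D where D: "((\<lambda>p. m (fst p) (snd p)) has_derivative D) (at (t, z0))"
    using m_diff tw unfolding z0_def differentiable_def by blast
  have \<omega>d: "((\<lambda>p. \<omega> (fst p) (snd p)) has_derivative D\<Omega>) (at (t, w))"
    by (rule has_derivative_transform_within_open[OF \<Omega>d, of "ball (t,w) e"]) (use e \<omega>\<Omega> in auto)
  have pd: "((\<lambda>p. (fst p, \<omega> (fst p) (snd p))) has_derivative (\<lambda>p. (fst p, D\<Omega> p))) (at (t, w))"
    by (intro has_derivative_Pair \<omega>d has_derivative_fst has_derivative_ident)
  have D': "((\<lambda>p. m (fst p) (snd p)) has_derivative D) (at ((\<lambda>p. (fst p, \<omega> (fst p) (snd p))) (t, w)))"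
    using D unfolding z0_def by simp
  have comp1: "((\<lambda>p. m (fst p) (\<omega> (fst p) (snd p))) has_derivative (\<lambda>p. D (fst p, D\<Omega> p))) (at (t, w))"
    using diff_chain_at[OF pd D'] by (simp add: o_def)
  have comp2: "((\<lambda>p. m (fst p) (\<omega> (fst p) (snd p))) has_derivative snd) (at (t, w))"
  proof (rule has_derivative_transform_within_open[OF has_derivative_snd[OF has_derivative_ident], of "ball (t,w) e"])
    fix p assume "p \<in> ball (t, w) e"
    then have "p \<in> W" using e by blast
    then show "snd p = m (fst p) (\<omega> (fst p) (snd p))" using inverse by (cases p) auto
  qed (use e in auto)
  have key: "D (fst p, D\<Omega> p) = snd p" for p
    using has_derivative_unique[OF comp1 comp2] by metis
  have lin: "linear D" using D has_derivative_linear by blast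
  define L where "L = (\<lambda>k. D (0, k))"
  define A where "A = D (1, 0)"
  define \<omega>' where "\<omega>' = R' * (- E) + 1 / w^2"
  define B where "B = R' * (- (w * E))"
  have Dsplit: "D (a, k) = complex_of_real a * A + L k" for a k
  proof -
    have "D (a, k) = D (a *\<^sub>R (1, 0)) + D (0, k)"
      using linear_add[OF lin, of "(a,0)" "(0,k)"] by simp
    also have "D (a *\<^sub>R (1, 0)) = a *\<^sub>R A" unfolding A_def using linear_scale[OF lin] by blast
    finally show ?thesis unfolding L_def by (simp add: scaleR_conv_of_real)
  qed
  have L1: "L (h * \<omega>') = h" for h
    using key[of "(0,h)"] unfolding L_def D\<Omega>_def \<omega>'_def by (simp add: algebra_simps)
  have L0: "L 0 = 0" unfolding L_def using linear_0[OF lin] by (simp add: zero_prod_def)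
  have \<omega>'0: "\<omega>' \<noteq> 0" using L1[of 1] L0 by auto
  have Lk: "L k = k / \<omega>'" for k using L1[of "k / \<omega>'"] \<omega>'0 by simp
  have AB: "A = - (B / \<omega>')"
  proof -
    have "D (1, B) = 0" using key[of "(1,0)"] unfolding D\<Omega>_def B_def by (simp add: algebra_simps)
    then have "A + B / \<omega>' = 0" using Dsplit[of 1 B] Lk by simp
    then show ?thesis using eq_neg_iff_add_eq_0 by blast
  qed
  have mz: "(m t has_field_derivative 1 / \<omega>') (at z0)"
  proof -
    have ci: "((\<lambda>k. (t, k)) has_derivative (\<lambda>k. (0, k))) (at z0)"
      by (auto intro!: derivative_eq_intros)
    have "(((\<lambda>p. m (fst p) (snd p)) \<circ> (\<lambda>k. (t, k))) has_derivative (D \<circ> (\<lambda>k. (0, k)))) (at z0)"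
      by (rule diff_chain_at[OF ci]) (use D in simp)
    moreover have "(D \<circ> (\<lambda>k. (0, k))) = (\<lambda>k. (1 / \<omega>') * k)"
      using Lk unfolding L_def by (auto simp: fun_eq_iff)
    ultimately have "(m t has_derivative (\<lambda>k. (1 / \<omega>') * k)) (at z0)" by (simp add: o_def)
    moreover have "(\<lambda>k. k / \<omega>') = (*) (1 / \<omega>')" by (auto simp: fun_eq_iff)
    ultimately show ?thesis unfolding has_field_derivative_def by metis
  qed
  have mt: "((\<lambda>s. m s z0) has_vector_derivative A) (at t)"
  proof -
    have ci: "((\<lambda>s. (s, z0)) has_derivative (\<lambda>a. (a, 0))) (at t)"
      by (auto intro!: derivative_eq_intros)
    have "(((\<lambda>p. m (fst p) (snd p)) \<circ> (\<lambda>s. (s, z0))) has_derivative (D \<circ> (\<lambda>a. (a, 0)))) (at t)"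
      by (rule diff_chain_at[OF ci]) (use D in simp)
    moreover have "(D \<circ> (\<lambda>a. (a, 0))) = (\<lambda>a. a *\<^sub>R A)"
      using Dsplit L0 by (auto simp: fun_eq_iff scaleR_conv_of_real)
    ultimately show ?thesis unfolding has_vector_derivative_def by (simp add: o_def)
  qed
  have mw: "m t z0 = w" using inverse tw unfolding z0_def by auto
  have "A = - w + (1 / \<omega>') / w"
    unfolding AB B_def by (rule alg_helper[OF w0 \<omega>'0 \<omega>'_def])
  then show ?thesis
    using vector_derivative_at[OF mt] DERIV_imp_deriv[OF mz] mw unfolding z0_def by simp
qed
end
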